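(* Let $m\geq 3$ be odd, $n=3m$, and let $\mathcal{L}_n$ be the latin square defined below. Every transversal of $\mathcal{L}_n$ contains at least one entry of the block $A_{22}$.
   Context: A latin square of order $n$ is viewed as its set of entries $(r,c,s)$ (symbol $s$ in row $r$, column $c$); a transversal is a set of $n$ entries containing each row, column and symbol exactly once. Let $m\ge3$ be odd and $n=3m$. The latin square $\mathcal{L}_n$ has rows, columns and symbols in $\{0,1,\dots,n-1\}$ and is partitioned into nine $m\times m$ blocks $A_{ij}$, $i,j\in\{1,2,3\}$: for $a,b\in\{0,\dots,m-1\}$, the cell in row $(i-1)m+a$ and column $(j-1)m+b$ contains $A_{ij}[a,b]$. Writing $t$ for the residue of $a+b$ modulo $m$ in $\{0,\dots,m-1\}$, $A_{ij}[a,b]=t$ if $t\neq 0$ and $i+j\equiv 2\pmod 3$; $A_{ij}[a,b]=t+m$ if $t\neq m-1$ and $i+j\equiv 0\pmod 3$; $A_{ij}[a,b]=t+2m$ if $t\neq m-1$ and $i+j\equiv1\pmod3$; $A_{ij}[a,b]=0$ if $t=0$ and $(i,j)=(1,1)$; $A_{ij}[a,b]=2m-1$ if $t=0$ and $(i,j)=(2,3)$; $A_{ij}[a,b]=3m-1$ if $t=0$ and $(i,j)=(3,2)$; $A_{ij}[a,b]=0$ if $t=m-1$ and $(i,j)\in\{(2,2),(3,3)\}$; $A_{ij}[a,b]=2m-1$ if $t=m-1$ and $(i,j)\in\{(1,2),(3,1)\}$; $A_{ij}[a,b]=3m-1$ if $t=m-1$ and $(i,j)\in\{(1,3),(2,1)\}$.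 An entry of $\mathcal{L}_n$ is said to be in block $A_{ij}$ if its cell lies in that block. *)

theory Defs
  imports Main
begin

text \<open>A latin square is viewed as its set of entries (row, column, symbol).\<close>
type_synonym entry = "nat \<times> nat \<times> nat"

text \<open>Block entry A_ij[a,b], with i, j in {1,2,3} and a, b in {0..m-1}.\<close>
definition Ablock :: "nat \<Rightarrow> nat \<Rightarrow> nat \<Rightarrow> nat \<Rightarrow> nat \<Rightarrow> nat" where
  "Ablock m i j a b =
    (let t = (a + b) mod m in
     if t \<noteq> 0 \<and> (i + j) mod 3 = 2 then t
     else if t \<noteq> m - 1 \<and> (i + j) mod 3 = 0 then t + m
     else if t \<noteq> m - 1 \<and> (i + j) mod 3 = 1 then t + 2 * m
     else if t = 0 \<and> (i, j) = (1, 1) then 0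
     else if t = 0 \<and> (i, j) = (2, 3) then 2 * m - 1
     else if t = 0 \<and> (i, j) = (3, 2) then 3 * m - 1
     else if t = m - 1 \<and> (i, j) \<in> {(2, 2), (3, 3)} then 0
     else if t = m - 1 \<and> (i, j) \<in> {(1, 2), (3, 1)} then 2 * m - 1
     else if t = m - 1 \<and> (i, j) \<in> {(1, 3), (2, 1)} then 3 * m - 1
     else undefined)"

definition Lsq :: "nat \<Rightarrow> entry set" where
  "Lsq m = {(r, c, s). r < 3 * m \<and> c < 3 * m \<and>
              s = Ablock m (r div m + 1) (c div m + 1) (r mod m) (c mod m)}"

definition transversal :: "nat \<Rightarrow> entry set \<Rightarrow> entry set \<Rightarrow> bool" where
  "transversal n L T \<longleftrightarrow> T \<subseteq> L \<and> finite T \<and> card T = n \<and>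
     (\<forall>r<n. \<exists>!e\<in>T. fst e = r) \<and>
     (\<forall>c<n. \<exists>!e\<in>T. fst (snd e) = c) \<and>
     (\<forall>s<n. \<exists>!e\<in>T. snd (snd e) = s)"

definition in_block :: "nat \<Rightarrow> nat \<Rightarrow> nat \<Rightarrow> entry \<Rightarrow> bool" where
  "in_block m i j e \<longleftrightarrow> (i - 1) * m \<le> fst e \<and> fst e < i * m \<and>
                          (j - 1) * m \<le> fst (snd e) \<and> fst (snd e) < j * m"

end

theory Submission
  imports Defs
begin

lemma bij_lemma:
  assumes "finite T" "card T = n" "\<forall>k<n. \<exists>!e\<in>T. p e = k"
  shows "bij_betw p T {..<n}"
proof -
  let ?T' = "{e\<in>T. p e < n}"
  have inj: "inj_on p ?T'"
  proof (rule inj_onI)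
    fix x y assume x: "x \<in> ?T'" and y: "y \<in> ?T'" and xy: "p x = p y"
    then have h: "\<exists>!e\<in>T. p e = p x" using assms(3) by auto
    show "x = y" using h x y xy by auto
  qed
  have img: "p ` ?T' = {..<n}" using assms(3) by force
  have "card ?T' = n" using card_image[OF inj] img by simp
  hence "?T' = T" using assms(1,2) by (intro card_subset_eq) auto
  then show ?thesis using inj img by (simp add: bij_betw_def)
qed

lemma sum_blocks:
  fixes g :: "nat \<Rightarrow> int"
  shows "(\<Sum>r<3*m. g r) = (\<Sum>a<m. g a + g (m+a) + g (2*m+a))"
proof -
  have inner: "sum g {q*m..<q*m+m} = (\<Sum>a<m. g (q*m+a))" for q
  proof -
    have "sum g {0+q*m..<m+q*m} = (\<Sum>a\<in>{0..<m}. g (a + q*m))"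
      by (rule sum.shift_bounds_nat_ivl)
    then show "sum g {q*m..<q*m+m} = (\<Sum>a<m. g (q*m+a))"
      by (simp add: add.commute atLeast0LessThan)
  qed
  have "(\<Sum>r<3*m. g r) = (\<Sum>q<3. sum g {q*m..<q*m+m})"
    using sum.nat_group[of g m 3] by (simp add: mult.commute)
  also have "\<dots> = sum g {0*m..<0*m+m} + sum g {1*m..<1*m+m} + sum g {2*m..<2*m+m}"
    by (simp add: numeral_3_eq_3 mult_2 add.assoc)
  also have "\<dots> = (\<Sum>a<m. g (0*m+a)) + (\<Sum>a<m. g (1*m+a)) + (\<Sum>a<m. g (2*m+a))"
    by (simp only: inner)
  finally show ?thesis by (simp add: sum.distrib)
qed

lemma sum_divmod:
  fixes g :: "nat \<Rightarrow> nat \<Rightarrow> int"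
  assumes "m > 0"
  shows "(\<Sum>r<3*m. g (r div m) (r mod m)) = (\<Sum>a<m. g 0 a + g 1 a + g 2 a)"
  unfolding sum_blocks using assms
proof (intro sum.cong refl)
  fix a assume "a \<in> {..<m}"
  then have "(m + a) div m = 1" "(m+a) mod m = a" "(2*m + a) div m = 2" "(2*m+a) mod m = a" "a div m = 0" "a mod m = a"
    using assms div_add_self1[of m a] div_mult_self3[of m 2 a] by auto
  then show "g (a div m) (a mod m) + g ((m + a) div m) ((m + a) mod m) + g ((2 * m + a) div m) ((2 * m + a) mod m) = g 0 a + g 1 a + g 2 a" by simp
qed

definition Asp :: "nat \<Rightarrow> nat \<Rightarrow> nat \<Rightarrow> nat \<Rightarrow> nat" where
  "Asp m I J t = (
     if t = 0 \<and> I=1 \<and> J=2 then 2*m-1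
     else if t = 0 \<and> I=2 \<and> J=1 then 3*m-1
     else if t = m-1 \<and> I=1 \<and> J=0 then 3*m-1
     else if t = m-1 \<and> I=J \<and> I \<noteq> 0 then 0
     else if t = m-1 \<and> I=2 \<and> J=0 then 2*m-1
     else ((I+J) mod 3)*m + t)"

lemma Ablock_eq:
  assumes "m \<ge> 3" "I < 3" "J < 3"
  shows "Ablock m (I+1) (J+1) a b = Asp m I J ((a+b) mod m)"
proof -
  define t where "t = (a+b) mod m"
  have t: "t < m" using assms(1) unfolding t_def by simp
  have ne: "m - 1 \<noteq> 0" using assms(1) by simp
  have I: "I = 0 \<or> I = 1 \<or> I = 2" and J: "J = 0 \<or> J = 1 \<or> J = 2" using assms by auto
  have "Ablock m 1 1 a b = Asp m 0 0 t"
    unfolding Ablock_def Asp_def Let_def t_def[symmetric] using ne t by (cases "t = 0"; cases "t = m - 1") simp_all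
  moreover
  have "Ablock m 1 2 a b = Asp m 0 1 t"
    unfolding Ablock_def Asp_def Let_def t_def[symmetric] using ne t by (cases "t = 0"; cases "t = m - 1") simp_all
  moreover
  have "Ablock m 1 3 a b = Asp m 0 2 t"
    unfolding Ablock_def Asp_def Let_def t_def[symmetric] using ne t by (cases "t = 0"; cases "t = m - 1") simp_all
  moreover
  have "Ablock m 2 1 a b = Asp m 1 0 t"
    unfolding Ablock_def Asp_def Let_def t_def[symmetric] using ne t by (cases "t = 0"; cases "t = m - 1") simp_all
  moreover
  have "Ablock m 2 2 a b = Asp m 1 1 t"
    unfolding Ablock_def Asp_def Let_def t_def[symmetric] using ne t by (cases "t = 0"; cases "t = m - 1") simp_all
  moreover
  have "Ablock m 2 3 a b = Asp m 1 2 t"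
    unfolding Ablock_def Asp_def Let_def t_def[symmetric] using ne t by (cases "t = 0"; cases "t = m - 1") simp_all
  moreover
  have "Ablock m 3 1 a b = Asp m 2 0 t"
    unfolding Ablock_def Asp_def Let_def t_def[symmetric] using ne t by (cases "t = 0"; cases "t = m - 1") simp_all
  moreover
  have "Ablock m 3 2 a b = Asp m 2 1 t"
    unfolding Ablock_def Asp_def Let_def t_def[symmetric] using ne t by (cases "t = 0"; cases "t = m - 1") simp_all
  moreover
  have "Ablock m 3 3 a b = Asp m 2 2 t"
    unfolding Ablock_def Asp_def Let_def t_def[symmetric] using ne t by (cases "t = 0"; cases "t = m - 1") simp_all
  ultimately show ?thesis unfolding t_def[symmetric] using I J by (elim disjE) (simp_all add: numeral_2_eq_2 numeral_3_eq_3)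
qed

lemma Asp_main:
  assumes "Asp m I J t \<noteq> 0" "Asp m I J t \<noteq> 2*m-1" "Asp m I J t \<noteq> 3*m-1"
  shows "Asp m I J t = ((I+J) mod 3)*m + t"
  using assms unfolding Asp_def by (auto split: if_splits)

lemma IJ_cases:
  assumes "I < (3::nat)" "J < (3::nat)"
  shows "(I=0\<and>J=0) \<or> (I=0\<and>J=1) \<or> (I=0\<and>J=2) \<or> (I=1\<and>J=0) \<or> (I=1\<and>J=1) \<or> (I=1\<and>J=2) \<or> (I=2\<and>J=0) \<or> (I=2\<and>J=1) \<or> (I=2\<and>J=2)"
proof -
  have "I = 0 \<or> I = 1 \<or> I = 2" "J = 0 \<or> J = 1 \<or> J = 2" using assms by linarith+
  then show ?thesis by blast
qed

lemma Asp0: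
  assumes "m \<ge> 3" "I < 3" "J < 3" "t < m" "\<not>(I=1\<and>J=1)" "Asp m I J t = 0"
  shows "(I=0\<and>J=0\<and>t=0) \<or> (I=2\<and>J=2\<and>t=m-1)"
  using IJ_cases[OF assms(2,3)] assms unfolding Asp_def by (elim disjE) (auto split: if_splits)

lemma Asp1:
  assumes "m \<ge> 3" "I < 3" "J < 3" "t < m" "\<not>(I=1\<and>J=1)" "Asp m I J t = 2*m-1"
  shows "(I=0\<and>J=1\<and>t=m-1) \<or> (I=1\<and>J=2\<and>t=0) \<or> (I=2\<and>J=0\<and>t=m-1)"
  using IJ_cases[OF assms(2,3)] assms unfolding Asp_def by (elim disjE) (auto split: if_splits)

lemma Asp2:
  assumes "m \<ge> 3" "I < 3" "J < 3" "t < m" "\<not>(I=1\<and>J=1)" "Asp m I J t = 3*m-1"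
  shows "(I=0\<and>J=2\<and>t=m-1) \<or> (I=2\<and>J=1\<and>t=0) \<or> (I=1\<and>J=0\<and>t=m-1)"
  using IJ_cases[OF assms(2,3)] assms unfolding Asp_def by (elim disjE) (auto split: if_splits)

definition d1 :: "nat \<Rightarrow> nat \<Rightarrow> nat \<Rightarrow> nat \<Rightarrow> int" where
  "d1 m I J s = (if I \<noteq> 1 then 1 else 0) - (if J = 1 then 1 else 0) - (if s div m = 2 \<and> s mod m < m - 1 then 1 else 0)"

lemma d1_main:
  assumes "m \<ge> 3" "I < 3" "J < 3" "t < m" "\<not>(I=1\<and>J=1)"
  shows "d1 m I J (((I+J) mod 3)*m + t) \<ge> 0"
proof -
  have "(((I+J) mod 3)*m + t) div m = (I+J) mod 3" using assms by simp
  then show ?thesis using IJ_cases[OF assms(2,3)] assms unfolding d1_def by (elim disjE) auto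
qed

lemma gauss_int: "(\<Sum>a<m. int a) * 2 = int m * (int m - 1)"
  by (induction m) (simp_all add: algebra_simps)

lemma gauss_dvd: assumes "odd m" shows "int m dvd (\<Sum>a<m. int a)"
proof -
  obtain k where k: "m = 2*k+1" using assms oddE by blast
  have "(\<Sum>a<m. int a) * 2 = (int m * int k) * 2" using gauss_int[of m] k by (simp add: algebra_simps)
  then have "(\<Sum>a<m. int a) = int m * int k" by simp
  then show ?thesis by simp
qed

lemma cnt_less: "m \<ge> 1 \<Longrightarrow> (\<Sum>a<m. if a < m - 1 then 1 else 0 :: int) = int m - 1"
proof (cases m)
  case (Suc k)
  have "(\<Sum>a<k. if a < k then 1 else 0 :: int) = (\<Sum>a<k. 1)" by (rule sum.cong) auto
  then show ?thesis using Suc by simp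
qed simp

lemma final:
  assumes m3: "m \<ge> (3::nat)"
  and c0: "(I0=0\<and>J0=0\<and>t0=0) \<or> (I0=2\<and>J0=2\<and>t0=m-1)"
  and c1: "(I1=0\<and>J1=1\<and>t1=m-1) \<or> (I1=1\<and>J1=2\<and>t1=0) \<or> (I1=2\<and>J1=0\<and>t1=m-1)"
  and c2: "(I2=0\<and>J2=2\<and>t2=m-1) \<or> (I2=2\<and>J2=1\<and>t2=0) \<or> (I2=1\<and>J2=0\<and>t2=m-1)"
  and h1: "((if I0 \<noteq> 1 then 1 else 0) - (if J0 = 1 then 1 else 0)) + ((if I1 \<noteq> 1 then 1 else 0) - (if J1 = 1 then 1 else 0))
          + ((if I2 \<noteq> 1 then 1 else 0) - (if J2 = 1 then 1 else 0)) \<le> (1::int)"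
  and h2: "t0+t1+t2+2 = m \<or> t0+t1+t2+2 = 2*m"
  and h3: "(3::nat) dvd I0+J0+I1+J1+I2+J2"
  shows False
  using c0 c1 c2
  apply (elim disjE)
  using h1 h2 h3 m3 apply (simp_all only: simp_thms)
  apply (auto)
  apply presburger
  done

theorem lemma13:
  fixes m :: nat and T :: "entry set"
  assumes "odd m" and "m \<ge> 3"
    and "transversal (3 * m) (Lsq m) T"
  shows "\<exists>e\<in>T. in_block m 2 2 e"
proof (rule ccontr)
  assume nb: "\<not> ?thesis"
  have m3: "m \<ge> 3" and m0: "m > 0" using assms(2) by auto
  from assms(3) have TL: "T \<subseteq> Lsq m" and fin: "finite T" and cT: "card T = 3*m"
    and uR: "\<forall>r<3*m. \<exists>!e\<in>T. fst e = r" and uC: "\<forall>c<3*m. \<exists>!e\<in>T. fst (snd e) = c"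
    and uS: "\<forall>s<3*m. \<exists>!e\<in>T. snd (snd e) = s"
    unfolding transversal_def by auto
  have ent: "fst e div m < 3 \<and> fst (snd e) div m < 3 \<and>
     snd (snd e) = Asp m (fst e div m) (fst (snd e) div m) ((fst e mod m + fst (snd e) mod m) mod m) \<and>
     \<not>(fst e div m = 1 \<and> fst (snd e) div m = 1)" if e: "e \<in> T" for e
  proof -
    obtain r c s where ers: "e = (r,c,s)" "r < 3*m" "c < 3*m"
      "s = Ablock m (r div m + 1) (c div m + 1) (r mod m) (c mod m)"
      using TL e unfolding Lsq_def by auto
    have rc: "r div m < 3" "c div m < 3" using ers by (auto simp: less_mult_imp_div_less)
    have "\<not>(r div m = 1 \<and> c div m = 1)"
    proof
      assume h: "r div m = 1 \<and> c div m = 1"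
      have hr: "r = m + r mod m" "c = m + c mod m"
        using h div_mult_mod_eq[of r m] div_mult_mod_eq[of c m] by simp_all
      have "r mod m < m" "c mod m < m" using m0 by auto
      then have "m \<le> r \<and> r < 2*m \<and> m \<le> c \<and> c < 2*m" using hr by linarith
      then have "in_block m 2 2 e" using ers unfolding in_block_def by auto
      then show False using nb e by blast
    qed
    then show ?thesis using ers rc Ablock_eq[OF m3 rc] by simp
  qed
  have bR: "bij_betw fst T {..<3*m}" using bij_lemma[OF fin cT uR] .
  have bC: "bij_betw (\<lambda>e. fst (snd e)) T {..<3*m}" using bij_lemma[OF fin cT uC] .
  have bS: "bij_betw (\<lambda>e. snd (snd e)) T {..<3*m}" using bij_lemma[OF fin cT uS] .
  have sR: "(\<Sum>e\<in>T. F (fst e)) = (\<Sum>r<3*m. F r)" for F :: "nat \<Rightarrow> int"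
    using sum.reindex_bij_betw[OF bR, of F] .
  have sC: "(\<Sum>e\<in>T. F (fst (snd e))) = (\<Sum>r<3*m. F r)" for F :: "nat \<Rightarrow> int"
    using sum.reindex_bij_betw[OF bC, of F] .
  have sS: "(\<Sum>e\<in>T. F (snd (snd e))) = (\<Sum>r<3*m. F r)" for F :: "nat \<Rightarrow> int"
    using sum.reindex_bij_betw[OF bS, of F] .
  have ex: "\<exists>e. (e \<in> T \<and> snd (snd e) = s) \<and> (\<forall>e'. e' \<in> T \<and> snd (snd e') = s \<longrightarrow> e' = e)"
    if "s < 3*m" for s using uS that unfolding Ex1_def by blast
  have s012: "0 < 3*m" "2*m-1 < 3*m" "3*m-1 < 3*m" using m3 by auto
  obtain e0 where e0': "(e0 \<in> T \<and> snd (snd e0) = 0) \<and> (\<forall>e'. e' \<in> T \<and> snd (snd e') = 0 \<longrightarrow> e' = e0)"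
    using ex[OF s012(1)] by blast
  obtain e1 where e1': "(e1 \<in> T \<and> snd (snd e1) = 2*m-1) \<and> (\<forall>e'. e' \<in> T \<and> snd (snd e') = 2*m-1 \<longrightarrow> e' = e1)"
    using ex[OF s012(2)] by blast
  obtain e2 where e2': "(e2 \<in> T \<and> snd (snd e2) = 3*m-1) \<and> (\<forall>e'. e' \<in> T \<and> snd (snd e') = 3*m-1 \<longrightarrow> e' = e2)"
    using ex[OF s012(3)] by blast
  have e0: "e0 \<in> T" "snd (snd e0) = 0" and u0: "\<And>e. e \<in> T \<Longrightarrow> snd (snd e) = 0 \<Longrightarrow> e = e0"
    using e0' by auto
  have e1: "e1 \<in> T" "snd (snd e1) = 2*m-1" and u1: "\<And>e. e \<in> T \<Longrightarrow> snd (snd e) = 2*m-1 \<Longrightarrow> e = e1"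
    using e1' by auto
  have e2: "e2 \<in> T" "snd (snd e2) = 3*m-1" and u2: "\<And>e. e \<in> T \<Longrightarrow> snd (snd e) = 3*m-1 \<Longrightarrow> e = e2"
    using e2' by auto
  define E where "E = {e0, e1, e2}"
  have ET: "E \<subseteq> T" using e0 e1 e2 E_def by auto
  have dist: "e0 \<noteq> e1" "e0 \<noteq> e2" "e1 \<noteq> e2" using e0 e1 e2 m3 by auto
  have main: "snd (snd e) = ((fst e div m + fst (snd e) div m) mod 3) * m + (fst e mod m + fst (snd e) mod m) mod m"
    if e: "e \<in> T - E" for e
  proof -
    have "snd (snd e) \<noteq> 0" "snd (snd e) \<noteq> 2*m-1" "snd (snd e) \<noteq> 3*m-1"
      using u0[of e] u1[of e] u2[of e] e unfolding E_def by blast+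
    moreover have "snd (snd e) = Asp m (fst e div m) (fst (snd e) div m) ((fst e mod m + fst (snd e) mod m) mod m)"
      using ent[of e] e by blast
    ultimately show ?thesis using Asp_main by metis
  qed
  define D1 where "D1 = (\<lambda>e::entry. d1 m (fst e div m) (fst (snd e) div m) (snd (snd e)))"
  define D2 where "D2 = (\<lambda>e::entry. int (fst e mod m) + int (fst (snd e) mod m) - int (snd (snd e) mod m))"
  define D3 where "D3 = (\<lambda>e::entry. int (fst e div m) + int (fst (snd e) div m) - int (snd (snd e) div m))"
  have spl: "sum D T = sum D (T - E) + sum D E" for D :: "entry \<Rightarrow> int"
    using sum.subset_diff[OF ET fin] .
  have sE: "sum D E = D e0 + D e1 + D e2" for D :: "entry \<Rightarrow> int"
    using dist unfolding E_def by simp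
  have a1: "(\<Sum>e\<in>T. if fst e div m \<noteq> 1 then 1 else 0 :: int) = 2 * int m"
    using sR[of "\<lambda>r. if r div m \<noteq> 1 then 1 else 0"] sum_divmod[OF m0, of "\<lambda>q a. if q \<noteq> 1 then 1 else 0"] by simp
  have a2: "(\<Sum>e\<in>T. if fst (snd e) div m = 1 then 1 else 0 :: int) = int m"
    using sC[of "\<lambda>r. if r div m = 1 then 1 else 0"] sum_divmod[OF m0, of "\<lambda>q a. if q = 1 then 1 else 0"] by simp
  have a3: "(\<Sum>e\<in>T. if snd (snd e) div m = 2 \<and> snd (snd e) mod m < m - 1 then 1 else 0 :: int) = int m - 1"
    using sS[of "\<lambda>r. if r div m = 2 \<and> r mod m < m - 1 then 1 else 0"]
      sum_divmod[OF m0, of "\<lambda>q a. if q = 2 \<and> a < m - 1 then 1 else 0"] cnt_less[of m] m0 by simp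
  have "sum D1 T = 1"
    unfolding D1_def d1_def sum_subtractf a1 a2 a3 by simp
  moreover have "sum D1 (T - E) \<ge> 0"
  proof (rule sum_nonneg)
    fix e assume e: "e \<in> T - E"
    have t: "(fst e mod m + fst (snd e) mod m) mod m < m" using m0 by simp
    show "D1 e \<ge> 0" unfolding D1_def main[OF e] using d1_main[OF m3 _ _ t] ent[of e] e by auto
  qed
  ultimately have H1: "D1 e0 + D1 e1 + D1 e2 \<le> 1" using spl[of D1] sE[of D1] by simp
  have b1: "(\<Sum>r<3*m. int (r mod m)) = 3 * (\<Sum>a<m. int a)"
    using sum_divmod[OF m0, of "\<lambda>q a. int a"] by (simp add: sum_distrib_left)
  have "sum D2 T = (\<Sum>r<3*m. int (r mod m))"
    unfolding D2_def sum_subtractf sum.distrib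
    using sR[of "\<lambda>r. int (r mod m)"] sC[of "\<lambda>r. int (r mod m)"] sS[of "\<lambda>r. int (r mod m)"] by simp
  then have "int m dvd sum D2 T" using b1 gauss_dvd[OF assms(1)] by simp
  moreover have "int m dvd sum D2 (T - E)"
  proof (rule dvd_sum)
    fix e assume e: "e \<in> T - E"
    define x where "x = fst e mod m + fst (snd e) mod m"
    have "(((fst e div m + fst (snd e) div m) mod 3) * m + x mod m) mod m = x mod m" using m0 by simp
    then have "D2 e = int x - int (x mod m)" unfolding D2_def main[OF e] x_def by simp
    also have "\<dots> = int m * int (x div m)"
      using div_mult_mod_eq[of x m] by (metis add_diff_cancel_right' of_nat_add of_nat_mult mult.commute)
    finally show "int m dvd D2 e" by simp
  qed
  ultimately have H2: "int m dvd D2 e0 + D2 e1 + D2 e2"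
    using spl[of D2] sE[of D2] by (metis add_diff_cancel_left' dvd_diff)
  have "sum D3 T = (\<Sum>r<3*m. int (r div m))"
    unfolding D3_def sum_subtractf sum.distrib
    using sR[of "\<lambda>r. int (r div m)"] sC[of "\<lambda>r. int (r div m)"] sS[of "\<lambda>r. int (r div m)"] by simp
  also have "\<dots> = 3 * int m"
    using sum_divmod[OF m0, of "\<lambda>q a. int q"] by simp
  finally have "3 dvd sum D3 T" by simp
  moreover have "3 dvd sum D3 (T - E)"
  proof (rule dvd_sum)
    fix e assume e: "e \<in> T - E"
    define y where "y = fst e div m + fst (snd e) div m"
    have "(((fst e div m + fst (snd e) div m) mod 3) * m + (fst e mod m + fst (snd e) mod m) mod m) div m = y mod 3"
      using m0 unfolding y_def by simp
    then have "D3 e = int y - int (y mod 3)" unfolding D3_def main[OF e] y_def by simp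
    also have "\<dots> = 3 * int (y div 3)"
      using div_mult_mod_eq[of y 3] by (metis add_diff_cancel_right' of_nat_add of_nat_mult mult.commute of_nat_numeral)
    finally show "3 dvd D3 e" by simp
  qed
  ultimately have H3: "3 dvd D3 e0 + D3 e1 + D3 e2"
    using spl[of D3] sE[of D3] by (metis add_diff_cancel_left' dvd_diff)
  have sv: "(2*m-1) div m = 1" "(2*m-1) mod m = m-1" "(3*m-1) div m = 2" "(3*m-1) mod m = m-1"
  proof -
    have x: "2*m-1 = (m-1) + 1*m" "3*m-1 = (m-1) + 2*m" using m3 by auto
    have d0: "(m-1) div m = 0" "(m-1) mod m = m-1" using m3 by auto
    have mne: "m \<noteq> 0" using m0 by simp
    show "(2*m-1) div m = 1" unfolding x(1) div_mult_self1[OF mne] d0 by simp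
    show "(3*m-1) div m = 2" unfolding x(2) div_mult_self1[OF mne] d0 by simp
    show "(2*m-1) mod m = m-1" unfolding x(1) mod_mult_self1 d0 by simp
    show "(3*m-1) mod m = m-1" unfolding x(2) mod_mult_self1 d0 by simp
  qed
  have tl: "(fst e mod m + fst (snd e) mod m) mod m < m" for e :: entry using m0 by simp
  note en0 = ent[OF e0(1)] and en1 = ent[OF e1(1)] and en2 = ent[OF e2(1)]
  have c0: "(fst e0 div m=0 \<and> fst (snd e0) div m=0 \<and> (fst e0 mod m + fst (snd e0) mod m) mod m=0) \<or>
            (fst e0 div m=2 \<and> fst (snd e0) div m=2 \<and> (fst e0 mod m + fst (snd e0) mod m) mod m=m-1)"
    using Asp0[OF m3 _ _ tl] en0 e0(2) by auto
  have c1: "(fst e1 div m=0 \<and> fst (snd e1) div m=1 \<and> (fst e1 mod m + fst (snd e1) mod m) mod m=m-1) \<or>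
            (fst e1 div m=1 \<and> fst (snd e1) div m=2 \<and> (fst e1 mod m + fst (snd e1) mod m) mod m=0) \<or>
            (fst e1 div m=2 \<and> fst (snd e1) div m=0 \<and> (fst e1 mod m + fst (snd e1) mod m) mod m=m-1)"
    using Asp1[OF m3 _ _ tl] en1 e1(2) by auto
  have c2: "(fst e2 div m=0 \<and> fst (snd e2) div m=2 \<and> (fst e2 mod m + fst (snd e2) mod m) mod m=m-1) \<or>
            (fst e2 div m=2 \<and> fst (snd e2) div m=1 \<and> (fst e2 mod m + fst (snd e2) mod m) mod m=0) \<or>
            (fst e2 div m=1 \<and> fst (snd e2) div m=0 \<and> (fst e2 mod m + fst (snd e2) mod m) mod m=m-1)"
    using Asp2[OF m3 _ _ tl] en2 e2(2) by auto
  define u where "u e = fst e mod m + fst (snd e) mod m" for e :: entry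
  define x where "x = u e0 mod m + u e1 mod m + u e2 mod m + 2"
  have "int x = D2 e0 + D2 e1 + D2 e2 - int m * (int (u e0 div m) + int (u e1 div m) + int (u e2 div m) - 2)"
  proof -
    have key0: "int (u e) = int m * int (u e div m) + int (u e mod m)" for e
      by (metis div_mult_mod_eq mult.commute of_nat_add of_nat_mult)
    have key: "int (fst e mod m) + int (fst (snd e) mod m) = int m * int (u e div m) + int (u e mod m)" for e
      using key0[of e] unfolding u_def by simp
    have m1: "int (m - 1) = int m - 1" using m0 by simp
    have "D2 e0 + D2 e1 + D2 e2 = (int m * int (u e0 div m) + int (u e0 mod m)) + (int m * int (u e1 div m) + int (u e1 mod m))
       + (int m * int (u e2 div m) + int (u e2 mod m)) - 2 * (int m - 1)"
      unfolding D2_def e0(2) e1(2) e2(2) sv m1 using key[of e0] key[of e1] key[of e2] by simp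
    then show ?thesis unfolding x_def by (simp add: algebra_simps)
  qed
  then have "int m dvd int x" using H2 by (metis dvd_diff dvd_triv_left)
  then obtain q where q: "x = m * q" by (metis int_dvd_int_iff dvdE)
  have um: "u e0 mod m < m" "u e1 mod m < m" "u e2 mod m < m" using m0 by auto
  have "x > 0" "x < m * 3" unfolding x_def using um by linarith+
  hence "q > 0" "q < 3" using q by auto
  hence h2: "x = m \<or> x = 2*m" using q by (auto simp: less_Suc_eq numeral_3_eq_3)
  have "int (fst e0 div m + fst (snd e0) div m + fst e1 div m + fst (snd e1) div m + fst e2 div m + fst (snd e2) div m)
     = D3 e0 + D3 e1 + D3 e2 + 3"
    unfolding D3_def e0(2) e1(2) e2(2) sv by simp
  then have "int 3 dvd int (fst e0 div m + fst (snd e0) div m + fst e1 div m + fst (snd e1) div m + fst e2 div m + fst (snd e2) div m)"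
    using H3 by simp
  then have h3: "3 dvd (fst e0 div m + fst (snd e0) div m + fst e1 div m + fst (snd e1) div m + fst e2 div m + fst (snd e2) div m)"
    by (simp only: int_dvd_int_iff)
  show False
    apply (rule final[OF m3 c0 c1 c2 _ _ h3])
    subgoal using H1 unfolding D1_def d1_def e0(2) e1(2) e2(2) sv using m3 by simp
    subgoal using h2 unfolding x_def u_def by simp
    done
qed

end
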